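(* Suppose $n\geq 4$ and $1\leq d\leq n-1$, and let $N=|\Omega_{n,d}|$. The smallest eigenvalue $\lambda_{N-1}$ of the transition matrix of the switch chain on $\Omega_{n,d}$ satisfies \[ (1+\lambda_{N-1})^{-1}\leq \tfrac14\, d^2n^2. \]
   Context: $\Omega_{n,d}$ is the set of simple digraphs on $[n]$ in which every vertex has in-degree and out-degree $d$. The switch chain: from $G$, choose an unordered pair of distinct arcs $\{(i,j),(k,\ell)\}$ uniformly at random; if $|\{i,j,k,\ell\}|=4$ and neither $(i,\ell)$ nor $(k,j)$ is an arc of $G$, replace $(i,j),(k,\ell)$ by $(i,\ell),(k,j)$; otherwise stay at $G$. Its transition matrix is symmetric, with real eigenvalues $1=\lambda_0>\lambda_1\geq\cdots\geq\lambda_{N-1}\geq-1$. *)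

theory Defs
  imports Complex_Main
begin

text \<open>A simple digraph on [n] = {1..n} is represented by its arc set
  (a set of ordered pairs of vertices, no loops).\<close>

type_synonym digraph = "(nat \<times> nat) set"

definition out_deg :: "digraph \<Rightarrow> nat \<Rightarrow> nat" where
  "out_deg G i = card {j. (i, j) \<in> G}"

definition in_deg :: "digraph \<Rightarrow> nat \<Rightarrow> nat" where
  "in_deg G j = card {i. (i, j) \<in> G}"

definition Omega :: "nat \<Rightarrow> nat \<Rightarrow> digraph set" where
  "Omega n d = {G. G \<subseteq> {1..n} \<times> {1..n} \<and> (\<forall>i. (i, i) \<notin> G) \<and>
      (\<forall>v\<in>{1..n}. out_deg G v = d \<and> in_deg G v = d)}"

fun switch :: "digraph \<Rightarrow> nat \<times> nat \<Rightarrow> nat \<times> nat \<Rightarrow> digraph" where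
  "switch G (i, j) (k, l) =
     (if card {i, j, k, l} = 4 \<and> (i, l) \<notin> G \<and> (k, j) \<notin> G
      then (G - {(i, j), (k, l)}) \<union> {(i, l), (k, j)} else G)"

definition arc_pairs :: "digraph \<Rightarrow> (nat \<times> nat) set set" where
  "arc_pairs G = {{a, b} | a b. a \<in> G \<and> b \<in> G \<and> a \<noteq> b}"

text \<open>Transition probability of the switch chain from G to H: the proportion of
  unordered pairs of distinct arcs whose switch leads to H (switch is symmetric in
  the two arcs, so this is well defined).\<close>
definition switch_P :: "digraph \<Rightarrow> digraph \<Rightarrow> real" where
  "switch_P G H =
     real (card {{a, b} | a b. a \<in> G \<and> b \<in> G \<and> a \<noteq> b \<and> switch G a b = H})
     / real (card (arc_pairs G))"

definition switch_eigenvalues :: "nat \<Rightarrow> nat \<Rightarrow> real set" where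
  "switch_eigenvalues n d = {lam. \<exists>v :: digraph \<Rightarrow> real.
      (\<exists>G\<in>Omega n d. v G \<noteq> 0) \<and>
      (\<forall>G\<in>Omega n d. (\<Sum>H\<in>Omega n d. switch_P G H * v H) = lam * v G)}"

end

theory Submission
  imports Defs "Jordan_Normal_Form.Char_Poly"
begin


lemma finite_eig_set:
  fixes S :: "'a set" and P :: "'a \<Rightarrow> 'a \<Rightarrow> real"
  assumes fin: "finite S"
  shows "finite {lam. \<exists>v :: 'a \<Rightarrow> real. (\<exists>G\<in>S. v G \<noteq> 0) \<and>
      (\<forall>G\<in>S. (\<Sum>H\<in>S. P G H * v H) = lam * v G)}" (is "finite ?E")
proof -
  define N where "N = card S"
  obtain f where f: "bij_betw f {0..<N} S" using ex_bij_betw_nat_finite[OF fin] N_def by blast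
  define A where "A = mat N N (\<lambda>(i,j). P (f i) (f j))"
  have A: "A \<in> carrier_mat N N" unfolding A_def by simp
  have "?E \<subseteq> {x. poly (char_poly A) x = 0}"
  proof
    fix lam assume "lam \<in> ?E"
    then obtain v where v1: "\<exists>G\<in>S. v G \<noteq> 0" and v2: "\<forall>G\<in>S. (\<Sum>H\<in>S. P G H * v H) = lam * v G" by blast
    define w where "w = vec N (\<lambda>i. v (f i))"
    have "eigenvector A w lam" unfolding eigenvector_def
    proof (intro conjI)
      show "w \<in> carrier_vec (dim_row A)" using A w_def by simp
      show "w \<noteq> 0\<^sub>v (dim_row A)"
      proof
        assume h: "w = 0\<^sub>v (dim_row A)"
        from v1 obtain G where G: "G \<in> S" "v G \<noteq> 0" by blast
        then obtain i where i: "i < N" "f i = G" using f unfolding bij_betw_def by auto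
        have "w $ i = 0" using h i A by simp
        then show False using i G w_def by simp
      qed
      show "A *\<^sub>v w = lam \<cdot>\<^sub>v w"
      proof (rule eq_vecI)
        show "dim_vec (A *\<^sub>v w) = dim_vec (lam \<cdot>\<^sub>v w)" using A w_def by simp
        fix i assume "i < dim_vec (lam \<cdot>\<^sub>v w)"
        then have i: "i < N" using w_def by simp
        have "(A *\<^sub>v w) $ i = (\<Sum>j\<in>{0..<N}. P (f i) (f j) * v (f j))"
          using i A unfolding A_def w_def by (simp add: scalar_prod_def)
        also have "\<dots> = (\<Sum>H\<in>S. P (f i) H * v H)"
          using sum.reindex_bij_betw[OF f, of "\<lambda>H. P (f i) H * v H"] by simp
        also have "\<dots> = lam * v (f i)" using v2 f i unfolding bij_betw_def by auto
        finally show "(A *\<^sub>v w) $ i = (lam \<cdot>\<^sub>v w) $ i" using i w_def by simp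
      qed
    qed
    then have "eigenvalue A lam" unfolding eigenvalue_def by blast
    then show "lam \<in> {x. poly (char_poly A) x = 0}" using eigenvalue_root_char_poly[OF A] by simp
  qed
  moreover have "char_poly A \<noteq> 0" using degree_monic_char_poly[OF A] by auto
  ultimately show ?thesis using poly_roots_finite finite_subset by blast
qed



lemma card4_distinct:
  assumes "card {i,j,k,l::nat} = 4"
  shows "i\<noteq>j \<and> i\<noteq>k \<and> i\<noteq>l \<and> j\<noteq>k \<and> j\<noteq>l \<and> k\<noteq>l"
  using assms by (auto simp: card_insert_if split: if_splits)

lemma switch_sym: "switch G a b = switch G b a"
  by (cases a; cases b) (auto simp: insert_commute)

lemma card_swap: "finite A \<Longrightarrow> x \<in> A \<Longrightarrow> y \<notin> A \<Longrightarrow> card (insert y (A - {x})) = card A"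
  by (simp add: card_Diff_singleton) (metis card_Diff1_less card_gt_0_iff empty_iff Suc_pred)

lemma Omega_sub: "G \<in> Omega n d \<Longrightarrow> G \<subseteq> {1..n} \<times> {1..n}"
  by (simp add: Omega_def)

lemma out_fin: "G \<in> Omega n d \<Longrightarrow> finite {j. (v,j)\<in>G}"
  by (rule finite_subset[of _ "{1..n}"]) (use Omega_sub in auto)

lemma in_fin: "G \<in> Omega n d \<Longrightarrow> finite {j. (j,v)\<in>G}"
  by (rule finite_subset[of _ "{1..n}"]) (use Omega_sub in auto)

lemma switch_Omega:
  assumes G: "G \<in> Omega n d" and a: "a \<in> G" and b: "b \<in> G"
  shows "switch G a b \<in> Omega n d"
proof -
  obtain i j where ij: "a = (i,j)" by (cases a)
  obtain k l where kl: "b = (k,l)" by (cases b)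
  show ?thesis
  proof (cases "card {i, j, k, l} = 4 \<and> (i, l) \<notin> G \<and> (k, j) \<notin> G")
    case False
    then have "switch G a b = G" using ij kl by (simp del: switch.simps) (simp only: switch.simps if_not_P[OF False])
    then show ?thesis using G by simp
  next
    case True
    then have c: "card {i, j, k, l} = 4" and il: "(i, l) \<notin> G" and kj: "(k, j) \<notin> G" by auto
    note D = card4_distinct[OF c]
    let ?G' = "(G - {(i, j), (k, l)}) \<union> {(i, l), (k, j)}"
    have sw: "switch G a b = ?G'" using True ij kl by simp
    have aG: "(i,j) \<in> G" and bG: "(k,l) \<in> G" using a b ij kl by auto
    have sub: "G \<subseteq> {1..n} \<times> {1..n}" and nl: "\<forall>x. (x,x) \<notin> G"
      and deg: "\<forall>v\<in>{1..n}. out_deg G v = d \<and> in_deg G v = d" using G by (auto simp: Omega_def)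
    have inr: "i \<in> {1..n}" "j \<in> {1..n}" "k \<in> {1..n}" "l \<in> {1..n}" using sub aG bG by auto
    have out: "out_deg ?G' v = d" if v: "v \<in> {1..n}" for v
    proof -
      have "v = i \<or> v = k \<or> (v \<noteq> i \<and> v \<noteq> k)" by blast
      then show ?thesis
      proof (elim disjE)
        assume "v = i"
        then have "{y. (v,y) \<in> ?G'} = insert l ({y. (i,y) \<in> G} - {j})" using D by auto
        moreover have "card (insert l ({y. (i,y) \<in> G} - {j})) = card {y. (i,y) \<in> G}"
          by (rule card_swap) (use out_fin[OF G] aG il in auto)
        ultimately show ?thesis using deg v \<open>v = i\<close> by (simp add: out_deg_def)
      next
        assume "v = k"
        then have "{y. (v,y) \<in> ?G'} = insert j ({y. (k,y) \<in> G} - {l})" using D by auto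
        moreover have "card (insert j ({y. (k,y) \<in> G} - {l})) = card {y. (k,y) \<in> G}"
          by (rule card_swap) (use out_fin[OF G] bG kj in auto)
        ultimately show ?thesis using deg v \<open>v = k\<close> by (simp add: out_deg_def)
      next
        assume "v \<noteq> i \<and> v \<noteq> k"
        then have "{y. (v,y) \<in> ?G'} = {y. (v,y) \<in> G}" by auto
        then show ?thesis using deg v by (simp add: out_deg_def)
      qed
    qed
    have inn: "in_deg ?G' v = d" if v: "v \<in> {1..n}" for v
    proof -
      have "v = j \<or> v = l \<or> (v \<noteq> j \<and> v \<noteq> l)" by blast
      then show ?thesis
      proof (elim disjE)
        assume "v = j"
        then have "{y. (y,v) \<in> ?G'} = insert k ({y. (y,j) \<in> G} - {i})" using D by auto
        moreover have "card (insert k ({y. (y,j) \<in> G} - {i})) = card {y. (y,j) \<in> G}"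
          by (rule card_swap) (use in_fin[OF G] aG kj in auto)
        ultimately show ?thesis using deg v \<open>v = j\<close> by (simp add: in_deg_def)
      next
        assume "v = l"
        then have "{y. (y,v) \<in> ?G'} = insert i ({y. (y,l) \<in> G} - {k})" using D by auto
        moreover have "card (insert i ({y. (y,l) \<in> G} - {k})) = card {y. (y,l) \<in> G}"
          by (rule card_swap) (use in_fin[OF G] bG il in auto)
        ultimately show ?thesis using deg v \<open>v = l\<close> by (simp add: in_deg_def)
      next
        assume "v \<noteq> j \<and> v \<noteq> l"
        then have "{y. (y,v) \<in> ?G'} = {y. (y,v) \<in> G}" by auto
        then show ?thesis using deg v by (simp add: in_deg_def)
      qed
    qed
    have "?G' \<in> Omega n d" unfolding Omega_def
      using sub nl inr D out inn by auto
    then show ?thesis using sw by simp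
  qed
qed



definition SP where "SP G H = {{a, b} | a b. a \<in> G \<and> b \<in> G \<and> a \<noteq> b \<and> switch G a b = H}"

lemma SP_sub: "SP G H \<subseteq> arc_pairs G"
  unfolding SP_def arc_pairs_def by blast

lemma finite_arc_pairs: "finite G \<Longrightarrow> finite (arc_pairs G)"
proof -
  assume "finite G"
  have "arc_pairs G \<subseteq> (\<lambda>p. {fst p, snd p}) ` (G \<times> G)"
  proof
    fix s assume "s \<in> arc_pairs G"
    then obtain a b where "s = {a,b}" "a \<in> G" "b \<in> G" unfolding arc_pairs_def by blast
    then show "s \<in> (\<lambda>p. {fst p, snd p}) ` (G \<times> G)" by (intro image_eqI[of _ _ "(a,b)"]) auto
  qed
  then show ?thesis using \<open>finite G\<close> finite_subset by blast
qed

lemma Omega_finite_G: "G \<in> Omega n d \<Longrightarrow> finite G"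
  by (rule finite_subset[OF Omega_sub]) auto

lemma SP_disj: "H \<noteq> H' \<Longrightarrow> SP G H \<inter> SP G H' = {}"
proof (rule ccontr)
  assume "H \<noteq> H'" "SP G H \<inter> SP G H' \<noteq> {}"
  then obtain a b a' b' where "{a,b} = {a',b'}" "switch G a b = H" "switch G a' b' = H'"
    unfolding SP_def by blast
  then show False using \<open>H \<noteq> H'\<close> by (auto simp: doubleton_eq_iff switch_sym)
qed

lemma SP_union: assumes "G \<in> Omega n d" shows " (\<Union>H\<in>Omega n d. SP G H) = arc_pairs G"
proof
  show "(\<Union>H\<in>Omega n d. SP G H) \<subseteq> arc_pairs G" using SP_sub by blast
  show "arc_pairs G \<subseteq> (\<Union>H\<in>Omega n d. SP G H)"
  proof
    fix s assume "s \<in> arc_pairs G"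
    then obtain a b where "s = {a,b}" "a \<in> G" "b \<in> G" "a \<noteq> b" unfolding arc_pairs_def by blast
    moreover have "switch G a b \<in> Omega n d" using switch_Omega assms calculation by blast
    ultimately show "s \<in> (\<Union>H\<in>Omega n d. SP G H)" unfolding SP_def by blast
  qed
qed

lemma rowsum:
  assumes G: "G \<in> Omega n d" and pos: "card (arc_pairs G) > 0"
  shows "(\<Sum>H\<in>Omega n d. switch_P G H) = 1"
proof -
  have fO: "finite (Omega n d)"
    by (rule finite_subset[of _ "Pow ({1..n} \<times> {1..n})"]) (auto simp: Omega_def)
  have fA: "finite (arc_pairs G)" using finite_arc_pairs Omega_finite_G G by blast
  have "(\<Sum>H\<in>Omega n d. card (SP G H)) = card (\<Union>H\<in>Omega n d. SP G H)"
  proof (rule card_UN_disjoint[symmetric])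
    show "finite (Omega n d)" by (rule fO)
    show "\<forall>i\<in>Omega n d. finite (SP G i)" using fA SP_sub[of G] finite_subset by blast
    show "\<forall>i\<in>Omega n d. \<forall>j\<in>Omega n d. i \<noteq> j \<longrightarrow> SP G i \<inter> SP G j = {}" using SP_disj by blast
  qed
  also have "\<dots> = card (arc_pairs G)" using SP_union[OF G] by simp
  finally have e: "(\<Sum>H\<in>Omega n d. real (card (SP G H))) = real (card (arc_pairs G))"
    by (metis of_nat_sum)
  have "(\<Sum>H\<in>Omega n d. switch_P G H) = (\<Sum>H\<in>Omega n d. real (card (SP G H))) / real (card (arc_pairs G))"
    unfolding switch_P_def SP_def[symmetric] by (simp add: sum_divide_distrib)
  also have "\<dots> = real (card (arc_pairs G)) / real (card (arc_pairs G))" by (simp only: e)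
  also have "\<dots> = 1" using pos by simp
  finally show ?thesis .
qed

lemma eig_bound:
  fixes S :: "'a set" and P :: "'a \<Rightarrow> 'a \<Rightarrow> real"
  assumes fin: "finite S" and nn: "\<And>G H. P G H \<ge> 0" and rs: "\<And>G. G \<in> S \<Longrightarrow> (\<Sum>H\<in>S. P G H) = 1"
    and pm: "\<And>G. G \<in> S \<Longrightarrow> P G G \<ge> p"
    and v1: "\<exists>G\<in>S. v G \<noteq> 0" and v2: "\<forall>G\<in>S. (\<Sum>H\<in>S. P G H * v H) = lam * v G"
  shows "lam \<ge> 2 * p - 1"
proof -
  have ne: "S \<noteq> {}" using v1 by blast
  define m where "m = Max ((\<lambda>G. \<bar>v G\<bar>) ` S)"
  have "m \<in> (\<lambda>G. \<bar>v G\<bar>) ` S" unfolding m_def using fin ne by (intro Max_in) auto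
  then obtain G0 where G0: "G0 \<in> S" "\<bar>v G0\<bar> = m" by auto
  have mx: "\<bar>v H\<bar> \<le> m" if "H \<in> S" for H unfolding m_def using fin that by auto
  obtain G1 where G1: "G1 \<in> S" "v G1 \<noteq> 0" using v1 by blast
  have mpos: "m > 0" using mx[OF G1(1)] G1(2) by linarith
  let ?q = "P G0 G0"
  have "lam * v G0 = ?q * v G0 + (\<Sum>H\<in>S-{G0}. P G0 H * v H)"
  proof -
    have "(\<Sum>H\<in>S. P G0 H * v H) = ?q * v G0 + (\<Sum>H\<in>S-{G0}. P G0 H * v H)"
      by (rule sum.remove[OF fin G0(1)])
    then show ?thesis using v2 G0(1) by simp
  qed
  then have eq: "(lam - ?q) * v G0 = (\<Sum>H\<in>S-{G0}. P G0 H * v H)" by (simp add: algebra_simps)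
  have "\<bar>lam - ?q\<bar> * m = \<bar>\<Sum>H\<in>S-{G0}. P G0 H * v H\<bar>" 
  proof -
    have "\<bar>(lam - ?q) * v G0\<bar> = \<bar>lam - ?q\<bar> * \<bar>v G0\<bar>" by (rule abs_mult)
    then show ?thesis using eq G0(2) by simp
  qed
  also have "\<dots> \<le> (\<Sum>H\<in>S-{G0}. \<bar>P G0 H * v H\<bar>)" by (rule sum_abs)
  also have "\<dots> \<le> (\<Sum>H\<in>S-{G0}. P G0 H * m)"
    by (rule sum_mono) (use nn mx in \<open>auto simp: abs_mult intro: mult_left_mono\<close>)
  also have "\<dots> = (\<Sum>H\<in>S-{G0}. P G0 H) * m" by (simp add: sum_distrib_right)
  also have "(\<Sum>H\<in>S-{G0}. P G0 H) = 1 - ?q"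
  proof -
    have "(\<Sum>H\<in>S. P G0 H) = ?q + (\<Sum>H\<in>S-{G0}. P G0 H)"
      by (rule sum.remove[OF fin G0(1)])
    then show ?thesis using rs[OF G0(1)] by simp
  qed
  finally have "\<bar>lam - ?q\<bar> \<le> 1 - ?q" using mpos by simp
  then show ?thesis using pm[OF G0(1)] by linarith
qed



lemma card_pre_bij:
  assumes "bij_betw f A C" shows "card {x\<in>A. f x \<in> B} = card (C \<inter> B)"
proof -
  have "bij_betw f {x\<in>A. f x \<in> B} (C \<inter> B)"
    using assms unfolding bij_betw_def inj_on_def by auto
  then show ?thesis by (rule bij_betw_same_card)
qed

lemma mod_bij_aux:
  fixes n :: nat and g :: "nat \<Rightarrow> int"
  assumes n: "n \<ge> 1"
    and ginj: "\<And>x y. x \<in> {1..n} \<Longrightarrow> y \<in> {1..n} \<Longrightarrow> g x mod int n = g y mod int n \<Longrightarrow> x = y"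
  shows "bij_betw (\<lambda>x. g x mod int n) {1..n} {0..<int n}"
proof -
  have inj: "inj_on (\<lambda>x. g x mod int n) {1..n}" using ginj unfolding inj_on_def by blast
  have sub: "(\<lambda>x. g x mod int n) ` {1..n} \<subseteq> {0..<int n}" using n by auto
  have "card ((\<lambda>x. g x mod int n) ` {1..n}) = n" using card_image[OF inj] by simp
  moreover have "card {0..<int n} = n" by simp
  ultimately have "(\<lambda>x. g x mod int n) ` {1..n} = {0..<int n}"
    using sub by (metis card_subset_eq finite_atLeastLessThan_int)
  then show ?thesis using inj unfolding bij_betw_def by blast
qed

lemma small_dvd_eq:
  fixes x y n :: nat
  assumes "x \<in> {1..n}" "y \<in> {1..n}" "int n dvd (int x - int y)"
  shows "x = y"
proof (rule ccontr)
  assume "x \<noteq> y"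
  then have "int x - int y \<noteq> 0" by simp
  from dvd_imp_le_int[OF this assms(3)] assms(1,2) show False by auto
qed

lemma bij_out:
  fixes n i :: nat assumes "n \<ge> 1"
  shows "bij_betw (\<lambda>j. (int j - int i) mod int n) {1..n} {0..<int n}"
proof (rule mod_bij_aux[OF assms])
  fix x y assume "x \<in> {1..n}" "y \<in> {1..n}" "(int x - int i) mod int n = (int y - int i) mod int n"
  then show "x = y" using small_dvd_eq by (simp add: mod_eq_dvd_iff)
qed

lemma bij_in:
  fixes n j :: nat assumes "n \<ge> 1"
  shows "bij_betw (\<lambda>i. (int j - int i) mod int n) {1..n} {0..<int n}"
proof (rule mod_bij_aux[OF assms])
  fix x y assume "x \<in> {1..n}" "y \<in> {1..n}" "(int j - int x) mod int n = (int j - int y) mod int n"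
  then have "int n dvd (int y - int x)" by (simp add: mod_eq_dvd_iff)
  then show "x = y" using small_dvd_eq \<open>x \<in> _\<close> \<open>y \<in> _\<close> by (metis)
qed

lemma Omega_ne:
  assumes n: "n \<ge> 1" and d: "d \<le> n - 1"
  shows "Omega n d \<noteq> {}"
proof -
  define G0 where "G0 = {(i,j). i \<in> {1..n} \<and> j \<in> {1..n} \<and> (int j - int i) mod int n \<in> {1..int d}}"
  have cd: "card ({0..<int n} \<inter> {1..int d}) = d"
  proof -
    have "{0..<int n} \<inter> {1..int d} = {1..int d}" using d n by auto
    then show ?thesis by simp
  qed
  have out: "out_deg G0 v = d" if v: "v \<in> {1..n}" for v
  proof -
    have "{j. (v,j) \<in> G0} = {j \<in> {1..n}. (int j - int v) mod int n \<in> {1..int d}}"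
      using v unfolding G0_def by auto
    moreover have "card {j \<in> {1..n}. (int j - int v) mod int n \<in> {1..int d}} = d"
      using card_pre_bij[OF bij_out[OF n, of v], of "{1..int d}"] cd by (simp only:)
    ultimately show ?thesis unfolding out_deg_def by (simp only:)
  qed
  have inn: "in_deg G0 v = d" if v: "v \<in> {1..n}" for v
  proof -
    have "{i. (i,v) \<in> G0} = {i \<in> {1..n}. (int v - int i) mod int n \<in> {1..int d}}"
      using v unfolding G0_def by auto
    moreover have "card {i \<in> {1..n}. (int v - int i) mod int n \<in> {1..int d}} = d"
      using card_pre_bij[OF bij_in[OF n, of v], of "{1..int d}"] cd by (simp only:)
    ultimately show ?thesis unfolding in_deg_def by (simp only:)
  qed
  have "G0 \<in> Omega n d" unfolding Omega_def using out inn by (auto simp: G0_def)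
  then show ?thesis by blast
qed

lemma card_G:
  assumes G: "G \<in> Omega n d" shows "card G = n * d"
proof -
  have deg: "\<forall>v\<in>{1..n}. out_deg G v = d" using G by (simp add: Omega_def)
  have "G = Sigma {1..n} (\<lambda>i. {j. (i,j) \<in> G})" using Omega_sub[OF G] by auto
  then have "card G = (\<Sum>i\<in>{1..n}. card {j. (i,j) \<in> G})"
    using out_fin[OF G] by (metis card_SigmaI finite_atLeastAtMost)
  also have "\<dots> = (\<Sum>i\<in>{1..n}. d)" using deg by (simp add: out_deg_def)
  finally show ?thesis by simp
qed

lemma card_arc_pairs:
  assumes G: "finite G" shows "2 * card (arc_pairs G) \<le> card G * card G"
proof -
  have "arc_pairs G \<subseteq> {B. B \<subseteq> G \<and> card B = 2}" unfolding arc_pairs_def by auto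
  then have "card (arc_pairs G) \<le> card {B. B \<subseteq> G \<and> card B = 2}"
    by (rule card_mono[rotated]) (use G in simp)
  also have "\<dots> = card G choose 2" by (rule n_subsets[OF G])
  finally have "2 * card (arc_pairs G) \<le> 2 * (card G choose 2)" by simp
  also have "\<dots> = card G * (card G - 1)"
  proof -
    have e: "even (card G * (card G - 1))" by auto
    then show ?thesis by (simp add: choose_two even_two_times_div_two)
  qed
  also have "\<dots> \<le> card G * card G" by simp
  finally show ?thesis .
qed

lemma stay_pair:
  assumes G: "G \<in> Omega n d" and n: "n \<ge> 1" and d: "d \<ge> 1"
  shows "SP G G \<noteq> {}"
proof -
  have sub: "G \<subseteq> {1..n} \<times> {1..n}" and nl: "\<forall>x. (x,x) \<notin> G"
    and deg: "\<forall>v\<in>{1..n}. out_deg G v = d" using G by (auto simp: Omega_def)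
  have ex: "\<exists>j. (v,j) \<in> G" if "v \<in> {1..n}" for v
  proof (rule ccontr)
    assume "\<not> ?thesis"
    then have "{j. (v,j) \<in> G} = {}" by auto
    then have "out_deg G v = 0" unfolding out_deg_def by simp
    then show False using deg that d by auto
  qed
  obtain j where j: "(1,j) \<in> G" using ex n by auto
  then have jn: "j \<in> {1..n}" using sub by auto
  obtain k where k: "(j,k) \<in> G" using ex[OF jn] by auto
  have ne: "(1,j) \<noteq> (j,k)" using j nl by auto
  have "card {1, j, j, k} \<le> 3" by (simp add: card_insert_le_m1 card_insert_if)
  then have "switch G (1,j) (j,k) = G" by simp
  then show ?thesis unfolding SP_def using j k ne by blast
qed



theorem mainTheorem7:
  fixes n d :: nat
  assumes "n \<ge> 4" and "1 \<le> d" and "d \<le> n - 1"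
  shows "1 + Min (switch_eigenvalues n d) > 0 \<and>
         inverse (1 + Min (switch_eigenvalues n d)) \<le> (1/4) * real d ^ 2 * real n ^ 2"
proof -
  have n1: "n \<ge> 1" using assms by simp
  define OM where "OM = Omega n d"
  define p :: real where "p = 2 / (real n * real d) ^ 2"
  have fO: "finite OM" unfolding OM_def
    by (rule finite_subset[of _ "Pow ({1..n} \<times> {1..n})"]) (auto simp: Omega_def)
  have neO: "OM \<noteq> {}" unfolding OM_def using Omega_ne n1 assms(3) by blast
  have Mpos: "card (arc_pairs G) > 0" if G: "G \<in> OM" for G
  proof -
    have "SP G G \<noteq> {}" using stay_pair G n1 assms(2) unfolding OM_def by blast
    moreover have "finite (arc_pairs G)" using finite_arc_pairs Omega_finite_G G unfolding OM_def by blast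
    ultimately show ?thesis using SP_sub[of G G] by (metis card_gt_0_iff subset_empty)
  qed
  have rs: "(\<Sum>H\<in>OM. switch_P G H) = 1" if G: "G \<in> OM" for G
    using rowsum Mpos G unfolding OM_def by blast
  have pm: "switch_P G G \<ge> p" if G: "G \<in> OM" for G
  proof -
    have fG: "finite G" using Omega_finite_G G unfolding OM_def by blast
    have cG: "card G = n * d" using card_G G unfolding OM_def by blast
    have fA: "finite (arc_pairs G)" using finite_arc_pairs fG by blast
    have c1: "card (SP G G) \<ge> 1"
    proof -
      have "SP G G \<noteq> {}" using stay_pair G n1 assms(2) unfolding OM_def by blast
      moreover have "finite (SP G G)" using SP_sub fA finite_subset by blast
      ultimately show ?thesis by (simp add: Suc_le_eq card_gt_0_iff)
    qed
    define M where "M = card (arc_pairs G)"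
    have M0: "real M > 0" using Mpos[OF G] M_def by simp
    have M2: "2 * real M \<le> (real n * real d) ^ 2"
    proof -
      have "2 * M \<le> (n*d) * (n*d)" using card_arc_pairs[OF fG] cG M_def by simp
      then have "real (2 * M) \<le> real ((n*d) * (n*d))" by linarith
      then show ?thesis by (simp add: power2_eq_square)
    qed
    have "switch_P G G = real (card (SP G G)) / real M"
      unfolding switch_P_def SP_def M_def by simp
    also have "\<dots> \<ge> 1 / real M" using c1 M0 by (simp add: divide_right_mono)
    finally have s: "switch_P G G \<ge> 1 / real M" .
    have "p \<le> 1 / real M" unfolding p_def using M0 M2 by (simp add: field_simps)
    then show ?thesis using s by linarith
  qed
  have nn: "switch_P G H \<ge> 0" for G H unfolding switch_P_def by simp
  let ?E = "switch_eigenvalues n d"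
  have Edef: "?E = {lam. \<exists>v :: digraph \<Rightarrow> real. (\<exists>G\<in>OM. v G \<noteq> 0) \<and>
      (\<forall>G\<in>OM. (\<Sum>H\<in>OM. switch_P G H * v H) = lam * v G)}"
    unfolding switch_eigenvalues_def OM_def by simp
  have finE: "finite ?E" unfolding Edef by (rule finite_eig_set[OF fO])
  have "1 \<in> ?E" unfolding Edef using neO rs by (intro CollectI exI[of _ "\<lambda>_. 1"]) auto
  then have neE: "?E \<noteq> {}" by blast
  have lb: "lam \<ge> 2 * p - 1" if "lam \<in> ?E" for lam
  proof -
    from that obtain v where v1: "\<exists>G\<in>OM. v G \<noteq> 0" and v2: "\<forall>G\<in>OM. (\<Sum>H\<in>OM. switch_P G H * v H) = lam * v G"
      unfolding Edef by blast
    show ?thesis by (rule eig_bound[OF fO nn rs pm v1 v2])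
  qed
  have "Min ?E \<in> ?E" using finE neE by (rule Min_in)
  then have m: "1 + Min ?E \<ge> 2 * p" using lb by fastforce
  have pp: "p > 0" unfolding p_def using n1 assms(2) by simp
  have "inverse (1 + Min ?E) \<le> inverse (2 * p)" using m pp by (intro le_imp_inverse_le) auto
  also have "inverse (2 * p) = (1/4) * real d ^ 2 * real n ^ 2" unfolding p_def by (simp add: power_mult_distrib field_simps)
  finally show ?thesis using m pp by linarith
qed

end
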